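(* Let $d\ge2$, $k\in\overline{\mathbb{N}}_\ast^d$ and $\sigma$ a skew-bicharacter of $\mathbb{Z}^d_k$. Let $N,M\in\mathbb{N}_\ast$ with $N+M<\wedge k$, and let $\omega_{N,M}$ be the diagonal operator on $\ell^2(\mathbb{Z}^d)$ with $\omega_{N,M}e_n=w_{N,M}(n)e_n$ for all $n\in\mathbb{Z}^d$. Then $\omega_{N,M}$ is a finite rank operator and, for all $m\in I_k$, \[ \big\|[\omega_{N,M},\pi_{k,\sigma}(\delta_{q_k(m)})]\big\|\le \frac{|m|}{M}, \] the norm being the operator norm on $\ell^2(\mathbb{Z}^d)$.
   Context: $\mathbb{N}_\ast=\{2,3,\ldots\}$, $\overline{\mathbb{N}}_\ast=\mathbb{N}_\ast\cup\{\infty\}$. For $k\in\overline{\mathbb{N}}_\ast^d$: $k\mathbb{Z}^d=\prod_jk_j\mathbb{Z}$ with $\infty\mathbb{Z}=\{0\}$, $\mathbb{Z}^d_k=\mathbb{Z}^d/k\mathbb{Z}^d$, $q_k$ the canonical surjection. A skew-bicharacter of $\mathbb{Z}^d_k$ is a bicharacter $\sigma$ into the unit circle with $\sigma(n,m)=\overline{\sigma(m,n)}$, identified with its lift to $\mathbb{Z}^d$. On $\ell^2(\mathbb{Z}^d_k)$ (basis $e_m$) let $U^n_{k,\sigma}e_m=\sigma(m,n)e_{m-n}$ and $\rho_{k,\sigma}(f)=\sum_nf(n)U^n_{k,\sigma}$ for $f\in\ell^1(\mathbb{Z}^d_k)$; $C^\ast(\mathbb{Z}^d_k,\sigma)$ is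 the norm closure of the image. $\delta_p\in\ell^1(\mathbb{Z}^d_k)$ is the indicator of $\{p\}$. $I_k=\prod_{j=1}^d\{\lfloor\frac{1-k_j}{2}\rfloor,\ldots,\lfloor\frac{k_j-1}{2}\rfloor\}$ (the $j$-th factor is $\mathbb{Z}$ if $k_j=\infty$); $q_k$ restricts to a bijection $I_k\to\mathbb{Z}^d_k$ and $\{I_k+n:n\in k\mathbb{Z}^d\}$ partitions $\mathbb{Z}^d$. The representation $\pi_{k,\sigma}$ of $C^\ast(\mathbb{Z}^d_k,\sigma)$ on $\ell^2(\mathbb{Z}^d)$ (canonical basis $(e_n)_{n\in\mathbb{Z}^d}$) is defined blockwise: for each $n\in k\mathbb{Z}^d$, $\pi_{k,\sigma}(a)$ leaves $H_n=\overline{\mathrm{span}}\{e_j:j\in I_k+n\}$ invariant and acts on it as $W_n\rho_{k,\sigma}(a)W_n^\ast$, where $W_n:\ell^2(\mathbb{Z}^d_k)\to H_n$ is the unitary with $W_ne_{q_k(j)}=e_{j+n}$ for $j\in I_k$. It is a faithful unital *-representation. For $n\in\mathbb{Z}^d$, $|n|=\sum_j|n_j|$; $\wedge k=\min\{|n|:n\in\mathbb{Z}^d\setminus I_k\}\in\overline{\mathbb{N}}_\ast$ ($=\infty$ if $k=\infty^d$). For $N,M\in\mathbb{N}_\ast$, $w_{N,M}(n)=1$ if $|n|\le N$, $=\frac{M+N-|n|}{M}$ if $N\le|n|\le M+N$, and $0$ otherwise. *)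

theory Defs
  imports "HOL-Analysis.Analysis" "HOL-Library.Extended_Nat"
begin

text \<open>Points of Z^d are int ^ 'd (d = CARD('d)); k \<in> (N_* \<union> {\<infinity>})^d is enat ^ 'd.\<close>

definition absn :: "int ^ 'd \<Rightarrow> int" where
  "absn n = (\<Sum>j\<in>UNIV. \<bar>n $ j\<bar>)"

definition kgrid :: "enat ^ 'd \<Rightarrow> (int ^ 'd) set" where
  "kgrid k = {n. \<forall>j. (case k $ j of enat K \<Rightarrow> int K dvd n $ j | \<infinity> \<Rightarrow> n $ j = 0)}"

text \<open>The fundamental domain I_k (int div is floor division).\<close>
definition Ik :: "enat ^ 'd \<Rightarrow> (int ^ 'd) set" where
  "Ik k = {n. \<forall>j. (case k $ j of
        enat K \<Rightarrow> (1 - int K) div 2 \<le> n $ j \<and> n $ j \<le> (int K - 1) div 2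
      | \<infinity> \<Rightarrow> True)}"

definition kred :: "enat ^ 'd \<Rightarrow> int ^ 'd \<Rightarrow> int ^ 'd" where
  "kred k v = (THE j. j \<in> Ik k \<and> v - j \<in> kgrid k)"

definition wedge :: "enat ^ 'd \<Rightarrow> enat" where
  "wedge k = (INF n\<in>- Ik k. enat (nat (absn n)))"

definition w :: "nat \<Rightarrow> nat \<Rightarrow> int ^ 'd \<Rightarrow> real" where
  "w N M n = (if absn n \<le> int N then 1
              else if absn n \<le> int (M + N) then (real M + real N - real_of_int (absn n)) / real M
              else 0)"

text \<open>Skew-bicharacter of Z^d_k, identified with its lift to Z^d.\<close>
definition skew_bichar :: "enat ^ 'd \<Rightarrow> (int ^ 'd \<Rightarrow> int ^ 'd \<Rightarrow> complex) \<Rightarrow> bool" where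
  "skew_bichar k \<sigma> \<longleftrightarrow>
     (\<forall>a b. cmod (\<sigma> a b) = 1) \<and>
     (\<forall>a b c. \<sigma> (a + b) c = \<sigma> a c * \<sigma> b c) \<and>
     (\<forall>a b c. \<sigma> a (b + c) = \<sigma> a b * \<sigma> a c) \<and>
     (\<forall>a b. \<sigma> a b = cnj (\<sigma> b a)) \<and>
     (\<forall>a b. a \<in> kgrid k \<longrightarrow> \<sigma> a b = 1)"

definition l2 :: "('a \<Rightarrow> complex) set" where
  "l2 = {x. (\<lambda>n. (cmod (x n))\<^sup>2) summable_on UNIV}"

definition l2norm :: "('a \<Rightarrow> complex) \<Rightarrow> real" where
  "l2norm x = sqrt (\<Sum>\<^sub>\<infinity>n. (cmod (x n))\<^sup>2)"

definition l2_bounded :: "(('a \<Rightarrow> complex) \<Rightarrow> ('a \<Rightarrow> complex)) \<Rightarrow> bool" where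
  "l2_bounded T \<longleftrightarrow> (\<exists>B. \<forall>x\<in>l2. T x \<in> l2 \<and> l2norm (T x) \<le> B * l2norm x)"

definition l2_opnorm :: "(('a \<Rightarrow> complex) \<Rightarrow> ('a \<Rightarrow> complex)) \<Rightarrow> real" where
  "l2_opnorm T = Sup ((\<lambda>x. l2norm (T x)) ` {x\<in>l2. l2norm x \<le> 1})"

definition finite_rank :: "(('a \<Rightarrow> complex) \<Rightarrow> ('a \<Rightarrow> complex)) \<Rightarrow> bool" where
  "finite_rank T \<longleftrightarrow> (\<exists>F. finite F \<and> F \<subseteq> l2 \<and>
      (\<forall>x\<in>l2. \<exists>c. T x = (\<lambda>i. \<Sum>v\<in>F. c v * v i)))"

text \<open>Elements of l^2(Z^d_k) are represented by k-periodic functions on Z^d.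
  U^p e_m = sigma(m,p) e_(m-p); W_n e_(q_k j) = e_(j+n) for j in I_k.\<close>
definition Uop :: "(int ^ 'd \<Rightarrow> int ^ 'd \<Rightarrow> complex) \<Rightarrow> int ^ 'd
                    \<Rightarrow> (int ^ 'd \<Rightarrow> complex) \<Rightarrow> (int ^ 'd \<Rightarrow> complex)" where
  "Uop \<sigma> p f = (\<lambda>a. \<sigma> (a + p) p * f (a + p))"

definition Wop :: "enat ^ 'd \<Rightarrow> int ^ 'd \<Rightarrow> (int ^ 'd \<Rightarrow> complex) \<Rightarrow> (int ^ 'd \<Rightarrow> complex)" where
  "Wop k n f = (\<lambda>i. if i - n \<in> Ik k then f (i - n) else 0)"

definition Wstar :: "enat ^ 'd \<Rightarrow> int ^ 'd \<Rightarrow> (int ^ 'd \<Rightarrow> complex) \<Rightarrow> (int ^ 'd \<Rightarrow> complex)" where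
  "Wstar k n y = (\<lambda>v. y (kred k v + n))"

text \<open>pi_{k,sigma}(delta_{q_k p}) = pi_{k,sigma}(U^p): acts on each block H_n, n in k Z^d,
  as W_n U^p W_n^*; the block of i is n = i - kred k i.\<close>
definition pi_delta :: "enat ^ 'd \<Rightarrow> (int ^ 'd \<Rightarrow> int ^ 'd \<Rightarrow> complex) \<Rightarrow> int ^ 'd
                    \<Rightarrow> (int ^ 'd \<Rightarrow> complex) \<Rightarrow> (int ^ 'd \<Rightarrow> complex)" where
  "pi_delta k \<sigma> p y = (\<lambda>i. let n = i - kred k i in Wop k n (Uop \<sigma> p (Wstar k n y)) i)"

definition omega :: "nat \<Rightarrow> nat \<Rightarrow> (int ^ 'd \<Rightarrow> complex) \<Rightarrow> (int ^ 'd \<Rightarrow> complex)" where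
  "omega N M x = (\<lambda>n. complex_of_real (w N M n) * x n)"

end

theory Submission
  imports Defs
begin

lemma coord_range:
  fixes K :: int assumes "K \<ge> 2"
  shows "(1 - K) div 2 + K - 1 \<le> (K - 1) div 2" "(K - 1) div 2 - (1 - K) div 2 \<le> K - 1"
  using assms by presburger+

lemma kred_ex:
  assumes k2: "\<forall>j. k $ j \<ge> 2"
  shows "\<exists>a. a \<in> Ik k \<and> v - a \<in> kgrid k"
proof -
  define a where "a = (\<chi> j. case k $ j of enat K \<Rightarrow> v$j - int K * ((v$j - (1 - int K) div 2) div int K) | \<infinity> \<Rightarrow> v$j)"
  have "a \<in> Ik k \<and> v - a \<in> kgrid k"
    unfolding Ik_def kgrid_def
  proof (intro conjI CollectI allI)
    fix j
    show "case k $ j of enat K \<Rightarrow> (1 - int K) div 2 \<le> a $ j \<and> a $ j \<le> (int K - 1) div 2 | \<infinity> \<Rightarrow> True"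
    proof (cases "k $ j")
      case (enat K)
      with k2 have K2: "int K \<ge> 2" by (metis enat_ord_simps(1) numeral_eq_enat of_nat_numeral zle_int)
      define lo where "lo = (1 - int K) div 2"
      have e: "a $ j = lo + (v$j - lo) mod int K"
        using enat unfolding a_def lo_def by (simp add: minus_div_mult_eq_mod[symmetric] algebra_simps)
      have "0 \<le> (v$j - lo) mod int K" "(v$j - lo) mod int K < int K" using K2 by auto
      with coord_range[OF K2] show ?thesis using enat e lo_def by auto
    qed simp
  next
    fix j
    show "case k $ j of enat K \<Rightarrow> int K dvd (v - a) $ j | \<infinity> \<Rightarrow> (v - a) $ j = 0"
      by (cases "k $ j") (auto simp: a_def)
  qed
  then show ?thesis by blast
qed

lemma kred_uniq:
  assumes k2: "\<forall>j. k $ j \<ge> 2"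
    and "a \<in> Ik k" "v - a \<in> kgrid k" "b \<in> Ik k" "v - b \<in> kgrid k"
  shows "a = b"
proof (rule vec_eq_iff[THEN iffD2], rule allI)
  fix j
  show "a $ j = b $ j"
  proof (cases "k $ j")
    case (enat K)
    with k2 have K2: "int K \<ge> 2" by (metis enat_ord_simps(1) numeral_eq_enat of_nat_numeral zle_int)
    from assms enat have r: "(1 - int K) div 2 \<le> a $ j" "a $ j \<le> (int K - 1) div 2"
        "(1 - int K) div 2 \<le> b $ j" "b $ j \<le> (int K - 1) div 2"
      and d: "int K dvd v$j - a$j" "int K dvd v$j - b$j"
      unfolding Ik_def kgrid_def by (auto dest!: spec[of _ j])
    have ee: "a$j - b$j = (v$j - b$j) - (v$j - a$j)" by simp
    from d have dd: "int K dvd a$j - b$j" unfolding ee by (rule dvd_diff[rotated])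
    show ?thesis
    proof (rule ccontr)
      assume "a $ j \<noteq> b $ j"
      then have "int K \<le> \<bar>a$j - b$j\<bar>" using dvd_imp_le_int[OF _ dd] by simp
      with r coord_range[OF K2] show False by linarith
    qed
  next
    case infinity
    with assms show ?thesis unfolding kgrid_def by (auto dest!: spec[of _ j])
  qed
qed

lemma kred_props:
  assumes "\<forall>j. k $ j \<ge> 2"
  shows "kred k v \<in> Ik k" "v - kred k v \<in> kgrid k"
proof -
  have "\<exists>!a. a \<in> Ik k \<and> v - a \<in> kgrid k" using kred_ex[OF assms] kred_uniq[OF assms] by blast
  from theI'[OF this] show "kred k v \<in> Ik k" "v - kred k v \<in> kgrid k" unfolding kred_def by auto
qed

lemma kred_eq:
  assumes "\<forall>j. k $ j \<ge> 2" "a \<in> Ik k" "v - a \<in> kgrid k"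
  shows "kred k v = a"
  using kred_props[OF assms(1)] kred_uniq[OF assms(1)] assms(2,3) by metis

lemma kgrid_diff: "a \<in> kgrid k \<Longrightarrow> b \<in> kgrid k \<Longrightarrow> a - b \<in> kgrid k"
  unfolding kgrid_def
proof (intro CollectI allI)
  fix j assume "a \<in> {n. \<forall>j. case k $ j of enat K \<Rightarrow> int K dvd n $ j | \<infinity> \<Rightarrow> n $ j = 0}"
    "b \<in> {n. \<forall>j. case k $ j of enat K \<Rightarrow> int K dvd n $ j | \<infinity> \<Rightarrow> n $ j = 0}"
  then show "case k $ j of enat K \<Rightarrow> int K dvd (a - b) $ j | \<infinity> \<Rightarrow> (a - b) $ j = 0"
    by (cases "k $ j") (auto dest!: spec[of _ j])
qed

lemma kgrid_add: "a \<in> kgrid k \<Longrightarrow> b \<in> kgrid k \<Longrightarrow> a + b \<in> kgrid k"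
  unfolding kgrid_def
proof (intro CollectI allI)
  fix j assume "a \<in> {n. \<forall>j. case k $ j of enat K \<Rightarrow> int K dvd n $ j | \<infinity> \<Rightarrow> n $ j = 0}"
    "b \<in> {n. \<forall>j. case k $ j of enat K \<Rightarrow> int K dvd n $ j | \<infinity> \<Rightarrow> n $ j = 0}"
  then show "case k $ j of enat K \<Rightarrow> int K dvd (a + b) $ j | \<infinity> \<Rightarrow> (a + b) $ j = 0"
    by (cases "k $ j") (auto dest!: spec[of _ j])
qed

lemma kgrid_0: "0 \<in> kgrid k"
  unfolding kgrid_def by (auto split: enat.splits)

lemma kgrid_Ik_eq:
  assumes k2: "\<forall>j. k $ j \<ge> 2" and "a \<in> Ik k" "b \<in> Ik k" "a - b \<in> kgrid k"
  shows "a = b"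
  using kred_uniq[OF k2, of a a b] assms by (simp add: kgrid_0)

lemma absn_nonneg: "0 \<le> absn n"
  unfolding absn_def by (simp add: sum_nonneg)

lemma absn_add: "absn (a + b) \<le> absn a + absn b"
  unfolding absn_def by (simp add: sum.distrib[symmetric] sum_mono abs_triangle_ineq)

lemma absn_minus: "absn (- a) = absn a"
  unfolding absn_def by simp

lemma absn_diff_bound: "\<bar>absn a - absn b\<bar> \<le> absn (a - b)"
proof -
  have "absn a \<le> absn (a - b) + absn b" using absn_add[of "a - b" b] by simp
  moreover have "absn b \<le> absn (b - a) + absn a" using absn_add[of "b - a" a] by simp
  moreover have "absn (b - a) = absn (a - b)" using absn_minus[of "a - b"] by simp
  ultimately show ?thesis by linarith
qed

lemma outside_Ik_big:
  assumes "enat (N + M) < wedge k" "v \<notin> Ik k"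
  shows "int (N + M) < absn v"
proof -
  have "wedge k \<le> enat (nat (absn v))" unfolding wedge_def using assms(2) by (auto intro: INF_lower)
  with assms(1) have "N + M < nat (absn v)" by (metis enat_ord_simps(2) order_less_le_trans)
  then show ?thesis by linarith
qed

lemma w_alt:
  assumes "M \<ge> 1"
  shows "w N M n = min 1 (max 0 ((real N + real M - real_of_int (absn n)) / real M))"
proof -
  have M: "real M > 0" using assms by simp
  show ?thesis unfolding w_def using M
    by (auto simp: field_simps min_def max_def not_le)
qed

lemma clamp_lip: "\<bar>min 1 (max 0 x) - min 1 (max 0 y)\<bar> \<le> \<bar>x - y\<bar>" for x y :: real
  by (auto simp: min_def max_def abs_if)

lemma w_lip:
  assumes "M \<ge> 1"
  shows "\<bar>w N M a - w N M b\<bar> \<le> real_of_int (absn (a - b)) / real M"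
proof -
  have M: "real M > 0" using assms by simp
  define X where "X = real N + real M"
  define ra where "ra = real_of_int (absn a)"
  define rb where "rb = real_of_int (absn b)"
  have "\<bar>w N M a - w N M b\<bar> \<le> \<bar>(X - ra) / real M - (X - rb) / real M\<bar>"
    unfolding w_alt[OF assms] X_def ra_def rb_def by (rule clamp_lip)
  also have "(X - ra) / real M - (X - rb) / real M = (rb - ra) / real M"
    by (simp add: diff_divide_distrib)
  also have "\<bar>(rb - ra) / real M\<bar> = \<bar>rb - ra\<bar> / real M"
    using M by simp
  also have "\<bar>rb - ra\<bar> \<le> real_of_int (absn (a - b))"
  proof -
    have "\<bar>absn a - absn b\<bar> \<le> absn (a - b)" by (rule absn_diff_bound)
    then have "real_of_int \<bar>absn a - absn b\<bar> \<le> real_of_int (absn (a - b))" by (simp only: of_int_le_iff)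
    then show ?thesis unfolding ra_def rb_def by (simp add: abs_minus_commute)
  qed
  then have "\<bar>rb - ra\<bar> / real M \<le> real_of_int (absn (a - b)) / real M"
    using M by (simp add: divide_right_mono)
  finally show ?thesis .
qed

lemma w_nonneg: "M \<ge> 1 \<Longrightarrow> 0 \<le> w N M n"
  by (simp add: w_alt)

lemma w_small:
  assumes "M \<ge> 1" "int (N + M) < absn u"
  shows "w N M v \<le> real_of_int (absn (u - v)) / real M"
proof -
  have M: "real M > 0" using assms by simp
  have "absn u \<le> absn (u - v) + absn v" using absn_add[of "u - v" v] by simp
  with assms(2) have h: "real N + real M - real_of_int (absn v) \<le> real_of_int (absn (u - v))" by linarith
  have "w N M v \<le> max 0 ((real N + real M - real_of_int (absn v)) / real M)"
    unfolding w_alt[OF assms(1)] by simp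
  also have "\<dots> \<le> real_of_int (absn (u - v)) / real M"
    using M h absn_nonneg[of "u - v"] by (auto intro: divide_right_mono)
  finally show ?thesis .
qed

lemma w_zero_outside:
  assumes "M \<ge> 1" "enat (N + M) < wedge k" "v \<notin> Ik k"
  shows "w N M v = 0"
  using outside_Ik_big[OF assms(2,3)] unfolding w_def by auto

definition Jmap :: "enat ^ 'd \<Rightarrow> int ^ 'd \<Rightarrow> int ^ 'd \<Rightarrow> int ^ 'd" where
  "Jmap k m i = kred k (kred k i + m) + (i - kred k i)"

lemma pi_delta_eq:
  assumes "\<forall>j. k $ j \<ge> 2"
  shows "pi_delta k \<sigma> m y i = \<sigma> (kred k i + m) m * y (Jmap k m i)"
  using kred_props(1)[OF assms, of i]
  unfolding pi_delta_def Wop_def Uop_def Wstar_def Jmap_def Let_def by simp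

lemma kred_decomp:
  assumes k2: "\<forall>j. k $ j \<ge> 2" and "a \<in> Ik k" "g \<in> kgrid k"
  shows "kred k (a + g) = a"
  using kred_eq[OF k2 assms(2)] assms(3) by simp

lemma Jmap_inj:
  assumes k2: "\<forall>j. k $ j \<ge> 2"
  shows "inj (Jmap k m)"
proof (rule injI)
  fix i i' assume eq: "Jmap k m i = Jmap k m i'"
  let ?r = "kred k i" and ?r' = "kred k i'"
  have g: "i - ?r \<in> kgrid k" "i' - ?r' \<in> kgrid k" using kred_props[OF k2] by auto
  have a: "kred k (?r + m) \<in> Ik k" "kred k (?r' + m) \<in> Ik k" using kred_props[OF k2] by auto
  have "kred k (Jmap k m i) = kred k (?r + m)" unfolding Jmap_def using kred_decomp[OF k2 a(1) g(1)] .
  moreover have "kred k (Jmap k m i') = kred k (?r' + m)" unfolding Jmap_def using kred_decomp[OF k2 a(2) g(2)] .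
  ultimately have e1: "kred k (?r + m) = kred k (?r' + m)" using eq by simp
  with eq have e2: "i - ?r = i' - ?r'" unfolding Jmap_def by simp
  have h1: "(?r + m) - kred k (?r + m) \<in> kgrid k" "(?r' + m) - kred k (?r' + m) \<in> kgrid k"
    using kred_props[OF k2] by auto
  have "((?r + m) - kred k (?r + m)) - ((?r' + m) - kred k (?r' + m)) \<in> kgrid k"
    using kgrid_diff[OF h1] .
  then have "?r - ?r' \<in> kgrid k" using e1 by (simp add: algebra_simps)
  then have "?r = ?r'" using kgrid_Ik_eq[OF k2] kred_props(1)[OF k2] by blast
  with e2 show "i = i'" by (metis diff_add_cancel)
qed

lemma Jmap_bound:
  assumes k2: "\<forall>j. k $ j \<ge> 2" and M: "M \<ge> 1" and wd: "enat (N + M) < wedge k"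
  shows "\<bar>w N M i - w N M (Jmap k m i)\<bar> \<le> real_of_int (absn m) / real M"
proof -
  let ?r = "kred k i"
  let ?n = "i - ?r"
  let ?j = "Jmap k m i"
  have Mp: "real M > 0" using M by simp
  have B0: "0 \<le> real_of_int (absn m) / real M" using absn_nonneg[of m] Mp by simp
  have gn: "?n \<in> kgrid k" using kred_props[OF k2] by auto
  have jI: "kred k (?r + m) \<in> Ik k" using kred_props[OF k2] by auto
  show ?thesis
  proof (cases "?n = 0")
    case True
    then have ri: "?r = i" by simp
    have iI: "i \<in> Ik k" using kred_props(1)[OF k2, of i] ri by simp
    have jdef: "?j = kred k (i + m)" unfolding Jmap_def using True ri by simp
    show ?thesis
    proof (cases "i + m \<in> Ik k")
      case True
      then have "?j = i + m" unfolding jdef by (rule kred_eq[OF k2]) (simp add: kgrid_0)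
      then show ?thesis using w_lip[OF M, of N i "i + m"] absn_minus[of m] by simp
    next
      case False
      have big1: "int (N + M) < absn (i + m)" using outside_Ik_big[OF wd False] .
      have jIk: "?j \<in> Ik k" using kred_props(1)[OF k2, of "i + m"] jdef by simp
      have "?j - m \<notin> Ik k"
      proof
        assume jm: "?j - m \<in> Ik k"
        have "(i + m) - ?j \<in> kgrid k" using kred_props(2)[OF k2, of "i + m"] jdef by simp
        then have "i - (?j - m) \<in> kgrid k" by (simp add: algebra_simps)
        then have "i = ?j - m" using kgrid_Ik_eq[OF k2 iI jm] by simp
        then have "?j = i + m" by (metis diff_add_cancel)
        with jIk False show False by simp
      qed
      then have big2: "int (N + M) < absn (?j - m)" using outside_Ik_big[OF wd] by blast
      have w1: "w N M i \<le> real_of_int (absn m) / real M"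
        using w_small[OF M big1, of i] by simp
      have w2: "w N M ?j \<le> real_of_int (absn m) / real M"
        using w_small[OF M big2, of ?j] absn_minus[of m] by simp
      show ?thesis using w1 w2 w_nonneg[OF M, of N i] w_nonneg[OF M, of N ?j] by linarith
    qed
  next
    case False
    have "i \<notin> Ik k"
    proof
      assume "i \<in> Ik k"
      then have "?r = i" by (rule kred_eq[OF k2]) (simp add: kgrid_0)
      with False show False by simp
    qed
    moreover have "?j \<notin> Ik k"
    proof
      assume jIk: "?j \<in> Ik k"
      have "kred k ?j = ?j" using kred_eq[OF k2 jIk] by (simp add: kgrid_0)
      moreover have "kred k ?j = kred k (?r + m)" unfolding Jmap_def by (rule kred_decomp[OF k2 jI gn])
      ultimately have "?j = kred k (?r + m)" by simp
      then show False using False unfolding Jmap_def by simp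
    qed
    ultimately show ?thesis using w_zero_outside[OF M wd] B0 by simp
  qed
qed

lemma comm_eq:
  assumes k2: "\<forall>j. k $ j \<ge> 2"
  shows "(omega N M (pi_delta k \<sigma> m x) - pi_delta k \<sigma> m (omega N M x)) i
     = \<sigma> (kred k i + m) m * complex_of_real (w N M i - w N M (Jmap k m i)) * x (Jmap k m i)"
  unfolding omega_def fun_diff_def pi_delta_eq[OF k2] by (simp add: algebra_simps)

lemma comm_l2:
  fixes m :: "int ^ 'd"
  assumes k2: "\<forall>j. k $ j \<ge> 2" and M: "M \<ge> 1" and wd: "enat (N + M) < wedge k"
    and sk: "skew_bichar k \<sigma>" and x: "x \<in> l2"
  defines "C \<equiv> omega N M (pi_delta k \<sigma> m x) - pi_delta k \<sigma> m (omega N M x)"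
  shows "C \<in> l2 \<and> l2norm C \<le> real_of_int (absn m) / real M * l2norm x"
proof -
  define B where "B = real_of_int (absn m) / real M"
  have B0: "0 \<le> B" unfolding B_def using absn_nonneg[of m] by simp
  let ?J = "Jmap k m"
  define f where "f = (\<lambda>i. (cmod (x i))\<^sup>2)"
  have fs: "f summable_on UNIV" using x unfolding l2_def f_def by simp
  have f0: "\<And>i. 0 \<le> f i" unfolding f_def by simp
  have inj: "inj ?J" using Jmap_inj[OF k2] .
  have fsJ: "f summable_on (range ?J)" by (rule summable_on_subset_banach[OF fs]) simp
  have gs: "(f \<circ> ?J) summable_on UNIV" using fsJ summable_on_reindex[OF inj, of f] by simp
  have bs: "(\<lambda>i. B\<^sup>2 * (f \<circ> ?J) i) summable_on UNIV" by (rule summable_on_cmult_right[OF gs])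
  have sig: "cmod (\<sigma> a b) = 1" for a b using sk unfolding skew_bichar_def by blast
  have pt: "(cmod (C i))\<^sup>2 \<le> B\<^sup>2 * (f \<circ> ?J) i" for i
  proof -
    have "cmod (C i) = \<bar>w N M i - w N M (?J i)\<bar> * cmod (x (?J i))"
      unfolding C_def comm_eq[OF k2] norm_mult sig norm_of_real by simp
    also have "\<dots> \<le> B * cmod (x (?J i))"
      using Jmap_bound[OF k2 M wd, of i m] unfolding B_def by (intro mult_right_mono) auto
    finally have "cmod (C i) \<le> B * cmod (x (?J i))" .
    then have "(cmod (C i))\<^sup>2 \<le> (B * cmod (x (?J i)))\<^sup>2"
      by (intro power_mono) auto
    then show ?thesis unfolding f_def by (simp add: power_mult_distrib)
  qed
  have hs: "(\<lambda>i. (cmod (C i))\<^sup>2) summable_on UNIV"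
    by (rule summable_on_comparison_test[OF bs]) (use pt in auto)
  have "(\<Sum>\<^sub>\<infinity>i. (cmod (C i))\<^sup>2) \<le> (\<Sum>\<^sub>\<infinity>i. B\<^sup>2 * (f \<circ> ?J) i)"
    by (rule infsum_mono[OF hs bs pt])
  also have "\<dots> = B\<^sup>2 * (\<Sum>\<^sub>\<infinity>i. (f \<circ> ?J) i)" by (rule infsum_cmult_right[OF gs])
  also have "(\<Sum>\<^sub>\<infinity>i. (f \<circ> ?J) i) = infsum f (range ?J)"
    using infsum_reindex[OF inj, of f] by (simp add: comp_def)
  also have "infsum f (range ?J) \<le> infsum f UNIV"
    by (rule infsum_mono2[OF fsJ fs]) (auto simp: f0)
  finally have le: "(\<Sum>\<^sub>\<infinity>i. (cmod (C i))\<^sup>2) \<le> B\<^sup>2 * infsum f UNIV"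
    by (simp add: mult_left_mono)
  have "l2norm C \<le> sqrt (B\<^sup>2 * infsum f UNIV)" unfolding l2norm_def using le by simp
  also have "\<dots> = B * l2norm x" unfolding l2norm_def f_def using B0 by (simp add: real_sqrt_mult)
  finally show ?thesis using hs unfolding l2_def B_def by simp
qed

lemma finite_absn_le: "finite {n :: int ^ 'd. absn n \<le> B}"
proof -
  have "{n :: int ^ 'd. absn n \<le> B} \<subseteq> vec_lambda ` (PiE UNIV (\<lambda>_. {-B..B}))"
  proof
    fix n :: "int ^ 'd" assume "n \<in> {n. absn n \<le> B}"
    then have "absn n \<le> B" by simp
    moreover have "\<bar>n $ j\<bar> \<le> absn n" for j
      unfolding absn_def by (rule member_le_sum) auto
    ultimately have nb: "\<bar>n $ j\<bar> \<le> B" for j by (meson order_trans)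
    have "n $ j \<in> {-B..B}" for j using nb[of j] by (auto simp: abs_le_iff)
    then have "\<forall>j. n $ j \<in> {-B..B}" by blast
    then have "(\<lambda>j. n $ j) \<in> PiE UNIV (\<lambda>_. {-B..B})" by (auto simp: PiE_def extensional_def)
    moreover have "n = vec_lambda (\<lambda>j. n $ j)" by simp
    ultimately show "n \<in> vec_lambda ` (PiE UNIV (\<lambda>_. {-B..B}))" by blast
  qed
  moreover have "finite (PiE (UNIV :: 'd set) (\<lambda>_. {-B..B}))" by (intro finite_PiE) auto
  ultimately show ?thesis by (meson finite_imageI finite_subset)
qed

lemma omega_finite_rank:
  shows "finite_rank (omega N M :: (int ^ 'd \<Rightarrow> complex) \<Rightarrow> _)"
proof -
  define S where "S = {n :: int ^ 'd. absn n \<le> int (N + M)}"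
  define e where "e = (\<lambda>(n :: int ^ 'd) (i :: int ^ 'd). if i = n then (1::complex) else 0)"
  have fS: "finite S" unfolding S_def by (rule finite_absn_le)
  have inj: "inj_on e S"
  proof (rule inj_onI)
    fix a b assume "e a = e b"
    then have "e a a = e b a" by simp
    then show "a = b" by (simp add: e_def split: if_splits)
  qed
  have el2: "e n \<in> l2" for n
  proof -
    have "(\<lambda>i. (cmod (e n i))\<^sup>2) summable_on {n}" by simp
    moreover have "(\<lambda>i. (cmod (e n i))\<^sup>2) summable_on {n} \<longleftrightarrow> (\<lambda>i. (cmod (e n i))\<^sup>2) summable_on UNIV"
      by (rule summable_on_cong_neutral) (auto simp: e_def)
    ultimately show ?thesis unfolding l2_def by simp
  qed
  have "\<forall>x\<in>l2. \<exists>c. omega N M x = (\<lambda>i. \<Sum>v\<in>e ` S. c v * v i)"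
  proof
    fix x :: "int ^ 'd \<Rightarrow> complex"
    define c where "c v = omega N M x (inv_into S e v)" for v
    have "(\<Sum>v\<in>e ` S. c v * v i) = omega N M x i" for i
    proof -
      have "(\<Sum>v\<in>e ` S. c v * v i) = (\<Sum>n\<in>S. c (e n) * e n i)"
        by (simp add: sum.reindex[OF inj])
      also have "\<dots> = (\<Sum>n\<in>S. if i = n then omega N M x n else 0)"
      proof (rule sum.cong)
        fix n assume "n \<in> S"
        then have "c (e n) = omega N M x n" by (simp add: c_def inv_into_f_f[OF inj])
        then show "c (e n) * e n i = (if i = n then omega N M x n else 0)" by (simp add: e_def)
      qed simp
      also have "\<dots> = (if i \<in> S then omega N M x i else 0)"
        using fS by (simp add: sum.delta)
      also have "\<dots> = omega N M x i"
        by (auto simp: S_def omega_def w_def)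
      finally show ?thesis .
    qed
    then show "\<exists>c. omega N M x = (\<lambda>i. \<Sum>v\<in>e ` S. c v * v i)" by (intro exI[of _ c]) auto
  qed
  moreover have "finite (e ` S)" using fS by simp
  moreover have "e ` S \<subseteq> l2" using el2 by auto
  ultimately show ?thesis unfolding finite_rank_def by blast
qed

theorem mainTheorem2:
  fixes k :: "enat ^ 'd" and \<sigma> :: "int ^ 'd \<Rightarrow> int ^ 'd \<Rightarrow> complex" and N M :: nat
  assumes "CARD('d) \<ge> 2"
    and "\<forall>j. k $ j \<ge> 2"
    and "skew_bichar k \<sigma>"
    and "N \<ge> 2" and "M \<ge> 2"
    and "enat (N + M) < wedge k"
  shows "finite_rank (omega N M) \<and>
    (\<forall>m\<in>Ik k.
      l2_bounded (\<lambda>x. omega N M (pi_delta k \<sigma> m x) - pi_delta k \<sigma> m (omega N M x)) \<and>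
      l2_opnorm (\<lambda>x. omega N M (pi_delta k \<sigma> m x) - pi_delta k \<sigma> m (omega N M x))
        \<le> real_of_int (absn m) / real M)"
proof (intro conjI ballI)
  show "finite_rank (omega N M)" by (rule omega_finite_rank)
next
  fix m assume "m \<in> Ik k"
  have M1: "M \<ge> 1" using assms by simp
  let ?C = "\<lambda>x. omega N M (pi_delta k \<sigma> m x) - pi_delta k \<sigma> m (omega N M x)"
  let ?B = "real_of_int (absn m) / real M"
  have key: "\<And>x. x \<in> l2 \<Longrightarrow> ?C x \<in> l2 \<and> l2norm (?C x) \<le> ?B * l2norm x"
    using comm_l2[OF assms(2) M1 assms(6) assms(3)] by blast
  show "l2_bounded ?C" unfolding l2_bounded_def using key by blast
  have B0: "0 \<le> ?B" using absn_nonneg[of m] by simp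
  have z: "(\<lambda>_. 0) \<in> {x\<in>l2. l2norm x \<le> 1}"
    unfolding l2_def l2norm_def by simp
  show "l2_opnorm ?C \<le> ?B" unfolding l2_opnorm_def
  proof (rule cSup_least)
    show "(\<lambda>x. l2norm (?C x)) ` {x \<in> l2. l2norm x \<le> 1} \<noteq> {}" using z by blast
  next
    fix y assume "y \<in> (\<lambda>x. l2norm (?C x)) ` {x \<in> l2. l2norm x \<le> 1}"
    then obtain x where x: "x \<in> l2" "l2norm x \<le> 1" and y: "y = l2norm (?C x)" by blast
    have "y \<le> ?B * l2norm x" using key[OF x(1)] y by simp
    also have "\<dots> \<le> ?B" using B0 x(2) by (rule mult_left_le[rotated])
    finally show "y \<le> ?B" .
  qed
qed

end
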